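(* Let $J_1,J_2$ be Möbius involutions of $\overline{\mathbb{C}}$ and $q_1,q_2$ polynomials of degree $d+1$. If the correspondences $J_1\circ\mathrm{Cov}_0^{q_1}$ and $J_2\circ\mathrm{Cov}_0^{q_2}$ are conformally conjugate, then $J_1$ and $J_2$ are conformally conjugate, and $q_1$ and $q_2$ are conformal covering equivalent.
   Context: Correspondences are subsets of $\overline{\mathbb{C}}\times\overline{\mathbb{C}}$; composition $G\circ F=\{(z,w):\exists v,(z,v)\in F,(v,w)\in G\}$; a map is identified with its graph. Conformal conjugacy of correspondences $F_1,F_2$: $F_2=\phi\circ F_1\circ\phi^{-1}$ for a Möbius map $\phi$. Deleted covering correspondence of a rational $q$: $\mathrm{Cov}_0^q=\{(z,w):(q(z)-q(w))/(z-w)=0\}$ (i.e. $\{q(z)=q(w)\}$ with one copy of the diagonal removed). Rational maps $q_1,q_2$ are conformal covering equivalent if there are Möbius maps $\phi,\psi$ with $q_2=\psi\circ q_1\circ\phi$. *)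

theory Defs
  imports "HOL-Analysis.Analysis" "HOL-Computational_Algebra.Polynomial"
begin

text \<open>The Riemann sphere is modelled as complex option; None is the point at infinity.\<close>
type_synonym sphere = "complex option"

type_synonym corr = "(sphere \<times> sphere) set"

definition moeb :: "complex \<Rightarrow> complex \<Rightarrow> complex \<Rightarrow> complex \<Rightarrow> sphere \<Rightarrow> sphere" where
  "moeb a b c d z = (case z of
      None \<Rightarrow> (if c = 0 then None else Some (a / c))
    | Some x \<Rightarrow> (if c * x + d = 0 then None else Some ((a * x + b) / (c * x + d))))"

definition is_moebius :: "(sphere \<Rightarrow> sphere) \<Rightarrow> bool" where
  "is_moebius f \<longleftrightarrow> (\<exists>a b c d. a * d - b * c \<noteq> 0 \<and> f = moeb a b c d)"

definition moebius_involution :: "(sphere \<Rightarrow> sphere) \<Rightarrow> bool" where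
  "moebius_involution J \<longleftrightarrow> is_moebius J \<and> J \<circ> J = id \<and> J \<noteq> id"

definition graph :: "(sphere \<Rightarrow> sphere) \<Rightarrow> corr" where
  "graph f = {(z, f z) | z. True}"

definition corr_comp :: "corr \<Rightarrow> corr \<Rightarrow> corr" where
  "corr_comp G F = {(z, w). \<exists>v. (z, v) \<in> F \<and> (v, w) \<in> G}"

definition corr_conf_conj :: "corr \<Rightarrow> corr \<Rightarrow> bool" where
  "corr_conf_conj F1 F2 \<longleftrightarrow>
     (\<exists>\<phi>. is_moebius \<phi> \<and> F2 = corr_comp (graph \<phi>) (corr_comp F1 (graph (inv \<phi>))))"

definition map_conf_conj :: "(sphere \<Rightarrow> sphere) \<Rightarrow> (sphere \<Rightarrow> sphere) \<Rightarrow> bool" where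
  "map_conf_conj f1 f2 \<longleftrightarrow> (\<exists>\<phi>. is_moebius \<phi> \<and> f2 = \<phi> \<circ> f1 \<circ> inv \<phi>)"

definition poly_sphere :: "complex poly \<Rightarrow> sphere \<Rightarrow> sphere" where
  "poly_sphere q z = (case z of None \<Rightarrow> None | Some x \<Rightarrow> Some (poly q x))"

text \<open>Deleted covering correspondence: zero set in the sphere squared of the difference
  quotient (q(z)-q(w))/(z-w), which on the diagonal equals q'(z); at infinity the
  point (\<infinity>,\<infinity>) lies on it exactly when deg q \<ge> 2 (infinity is then a critical point).\<close>
definition Cov0 :: "complex poly \<Rightarrow> corr" where
  "Cov0 q = {(Some z, Some w) | z w. poly q z = poly q w \<and> (z \<noteq> w \<or> poly (pderiv q) z = 0)}
            \<union> (if degree q \<ge> 2 then {(None, None)} else {})"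

definition conf_cov_equiv :: "complex poly \<Rightarrow> complex poly \<Rightarrow> bool" where
  "conf_cov_equiv q1 q2 \<longleftrightarrow>
     (\<exists>\<phi> \<psi>. is_moebius \<phi> \<and> is_moebius \<psi> \<and> poly_sphere q2 = \<psi> \<circ> poly_sphere q1 \<circ> \<phi>)"

end

theory Submission
  imports Defs "HOL-Computational_Algebra.Fundamental_Theorem_Algebra"
begin

lemma moeb_comp:
  assumes "a*d - b*c \<noteq> 0" "a'*d' - b'*c' \<noteq> 0"
  shows "moeb a b c d (moeb a' b' c' d' z) = moeb (a*a' + b*c') (a*b' + b*d') (c*a' + d*c') (c*b' + d*d') z"
proof (cases z)
  case None
  show ?thesis
  proof (cases "c' = 0")
    case True
    then have "a' \<noteq> 0" using assms by auto
    then show ?thesis using None True by (auto simp: moeb_def)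
  next
    case False
    have e1: "c * a'/c' + d = (c*a' + d*c')/c'" using False by (simp add: field_simps)
    have e2: "a * a'/c' + b = (a*a' + b*c')/c'" using False by (simp add: field_simps)
    show ?thesis using None False
      by (auto simp: moeb_def e1 e2)
  qed
next
  case (Some x)
  show ?thesis
  proof (cases "c'*x + d' = 0")
    case True
    have nz: "a'*x + b' \<noteq> 0"
    proof
      assume h: "a'*x + b' = 0"
      have "a'*d' - b'*c' = a'*(c'*x + d') - c'*(a'*x+b')" by (simp add: algebra_simps)
      then show False using h True assms(2) by simp
    qed
    have "(c*a' + d*c')*x + (c*b'+d*d') = c*(a'*x+b') + d*(c'*x+d')"
      by (simp add: algebra_simps)
    then have e1: "(c*a' + d*c')*x + (c*b'+d*d') = c*(a'*x+b')"
      using True by simp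
    have "(a*a' + b*c')*x + (a*b'+b*d') = a*(a'*x+b') + b*(c'*x+d')"
      by (simp add: algebra_simps)
    then have e2: "(a*a' + b*c')*x + (a*b'+b*d') = a*(a'*x+b')"
      using True by simp
    show ?thesis using Some True nz by (auto simp: moeb_def e1 e2)
  next
    case False
    let ?y = "(a'*x+b')/(c'*x+d')"
    have e1: "c * (a'*x+b') / (c'*x+d') + d = ((c*a' + d*c')*x + (c*b'+d*d'))/(c'*x+d')" using False by (simp add: field_simps)
    have e2: "a * (a'*x+b') / (c'*x+d') + b = ((a*a' + b*c')*x + (a*b'+b*d'))/(c'*x+d')" using False by (simp add: field_simps)
    show ?thesis using Some False
      by (auto simp: moeb_def e1 e2)
  qed
qed

lemma moeb_comp_fun:
  assumes "a*d - b*c \<noteq> 0" "a'*d' - b'*c' \<noteq> 0"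
  shows "moeb a b c d \<circ> moeb a' b' c' d' = moeb (a*a' + b*c') (a*b' + b*d') (c*a' + d*c') (c*b' + d*d')"
  using moeb_comp[OF assms] by (auto simp: fun_eq_iff)

lemma moeb_scale:
  assumes "k \<noteq> 0"
  shows "moeb (k*a) (k*b) (k*c) (k*d) = moeb a b c d"
proof
  fix z show "moeb (k*a) (k*b) (k*c) (k*d) z = moeb a b c d z"
  proof (cases z)
    case None then show ?thesis using assms by (auto simp: moeb_def)
  next
    case (Some x)
    have "k*c*x + k*d = k*(c*x+d)" "k*a*x + k*b = k*(a*x+b)" by (simp_all add: algebra_simps)
    then show ?thesis using assms Some by (auto simp: moeb_def)
  qed
qed

lemma moeb_id: "moeb 1 0 0 1 = id"
  by (auto simp: fun_eq_iff moeb_def split: option.splits)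

lemma moeb_scalar: "k \<noteq> 0 \<Longrightarrow> moeb k 0 0 k = id"
  using moeb_scale[of k 1 0 0 1] moeb_id by simp

lemma moeb_eq_id:
  assumes "moeb a b c d = id"
  shows "b = 0 \<and> c = 0 \<and> a = d"
proof -
  have h1: "moeb a b c d None = None" using assms by simp
  then have c0: "c = 0" by (auto simp: moeb_def split: if_splits)
  have h2: "moeb a b c d (Some 0) = Some 0" using assms by simp
  then have d0: "d \<noteq> 0" and b0: "b = 0" using c0 by (auto simp: moeb_def split: if_splits)
  have h3: "moeb a b c d (Some 1) = Some 1" using assms by simp
  then have "a = d" using c0 d0 b0 by (auto simp: moeb_def split: if_splits)
  then show ?thesis using c0 b0 by simp
qed

lemma moeb_bij_inv:
  assumes "a*d - b*c \<noteq> 0"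
  shows "bij (moeb a b c d)" "inv (moeb a b c d) = moeb d (-b) (-c) a"
proof -
  have det2: "d*a - (-b)*(-c) \<noteq> 0" using assms by (simp add: algebra_simps)
  have c1: "moeb a b c d \<circ> moeb d (-b) (-c) a = id"
    using moeb_comp_fun[OF assms det2] moeb_scalar[of "a*d-b*c"] assms
    by (simp add: algebra_simps)
  have c2: "moeb d (-b) (-c) a \<circ> moeb a b c d = id"
    using moeb_comp_fun[OF det2 assms] moeb_scalar[of "a*d-b*c"] assms
    by (simp add: algebra_simps)
  show "bij (moeb a b c d)" using c1 c2 o_bij by blast
  show "inv (moeb a b c d) = moeb d (-b) (-c) a" using c1 c2 inv_unique_comp by blast
qed

lemma is_moebius_bij: "is_moebius f \<Longrightarrow> bij f"
  unfolding is_moebius_def using moeb_bij_inv by blast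

lemma is_moebius_inv: "is_moebius f \<Longrightarrow> is_moebius (inv f)"
proof -
  assume "is_moebius f"
  then obtain a b c d where "a*d-b*c \<noteq> 0" "f = moeb a b c d" unfolding is_moebius_def by blast
  moreover have "d*a - (-b)*(-c) \<noteq> 0" using calculation by (simp add: algebra_simps)
  ultimately show ?thesis using moeb_bij_inv unfolding is_moebius_def by metis
qed

lemma is_moebius_comp: "is_moebius f \<Longrightarrow> is_moebius g \<Longrightarrow> is_moebius (f \<circ> g)"
proof -
  assume "is_moebius f" "is_moebius g"
  then obtain a b c d a' b' c' d' where h: "a*d-b*c \<noteq> 0" "f = moeb a b c d"
     "a'*d'-b'*c' \<noteq> 0" "g = moeb a' b' c' d'" unfolding is_moebius_def by blast
  have "(a*a' + b*c')*(c*b' + d*d') - (a*b' + b*d')*(c*a' + d*c') = (a*d-b*c)*(a'*d'-b'*c')"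
    by (simp add: algebra_simps)
  then have "(a*a' + b*c')*(c*b' + d*d') - (a*b' + b*d')*(c*a' + d*c') \<noteq> 0" using h by simp
  then show ?thesis using moeb_comp_fun[OF h(1) h(3)] h unfolding is_moebius_def by metis
qed

lemma invol_normal:
  assumes "moebius_involution J"
  shows "\<exists>P. is_moebius P \<and> J = P \<circ> moeb (-1) 0 0 1 \<circ> inv P"
proof -
  obtain a b c d where det: "a*d-b*c \<noteq> 0" and J: "J = moeb a b c d"
    using assms unfolding moebius_involution_def is_moebius_def by blast
  have JJ: "moeb a b c d \<circ> moeb a b c d = id" "moeb a b c d \<noteq> id"
    using assms J unfolding moebius_involution_def by auto
  have e: "b*(a+d) = 0 \<and> c*(a+d) = 0 \<and> a*a + b*c = c*b + d*d"
    using moeb_eq_id[OF JJ(1)[unfolded moeb_comp_fun[OF det det]]] by (simp add: algebra_simps)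
  have dA: "d = -a"
  proof (rule ccontr)
    assume "d \<noteq> -a"
    then have ad: "a + d \<noteq> 0" by (metis add.commute add_eq_0_iff)
    then have "b = 0" "c = 0" using e by auto
    moreover have "(a-d)*(a+d) = 0" using e by (simp add: algebra_simps)
    then have "a = d" using ad by simp
    ultimately have "moeb a b c d = id" using moeb_scalar det by auto
    then show False using JJ by simp
  qed
  define Dd where "Dd = a*a + b*c"
  have D0: "Dd \<noteq> 0" using det dA unfolding Dd_def by (simp add: algebra_simps neg_eq_iff_add_eq_0)
  define N where "N = moeb (-1) 0 0 (1::complex)"
  have detN: "(-1)*1 - 0*0 \<noteq> (0::complex)" by simp
  have detA: "a*(-a) - b*c \<noteq> 0" using det dA by simp
  show ?thesis
  proof (cases "b = 0")
    case False
    define r where "r = csqrt Dd"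
    have rr: "r*r = Dd" unfolding r_def by (metis power2_csqrt power2_eq_square)
    have r0: "r \<noteq> 0" using rr D0 by auto
    have detP: "b*(r-a) - b*(-r-a) \<noteq> 0"
      using False r0 by (simp add: algebra_simps)
    define P where "P = moeb b b (-r-a) (r-a)"
    have "J \<circ> P = moeb (r*(-b)) (r*b) (r*(r+a)) (r*(r-a))"
      unfolding J P_def dA moeb_comp_fun[OF detA detP]
      using rr unfolding Dd_def by (intro arg_cong4[where f=moeb]) (simp_all add: algebra_simps)
    also have "\<dots> = moeb (-b) b (r+a) (r-a)" using moeb_scale r0 by blast
    also have "\<dots> = P \<circ> N" unfolding P_def N_def moeb_comp_fun[OF detP detN]
      by (intro arg_cong4[where f=moeb]) (simp_all add: algebra_simps)
    finally have JP: "J \<circ> P = P \<circ> N" .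
    have bP: "bij P" unfolding P_def using moeb_bij_inv detP by blast
    have "J = J \<circ> (P \<circ> inv P)" using surj_iff[THEN iffD1, OF bij_is_surj[OF bP]] by simp
    also have "\<dots> = P \<circ> N \<circ> inv P" using JP by (simp add: o_assoc)
    finally show ?thesis unfolding N_def P_def is_moebius_def using detP by blast
  next
    case True
    have a0: "a \<noteq> 0" using D0 True unfolding Dd_def by simp
    have detP: "0*c - (2*a)*1 \<noteq> 0" using a0 by simp
    define P where "P = moeb 0 (2*a) 1 c"
    have "J \<circ> P = moeb (a*0) (a*(2*a)) (a*(-1)) (a*c)"
      unfolding J P_def dA moeb_comp_fun[OF detA detP]
      using True by (intro arg_cong4[where f=moeb]) (simp_all add: algebra_simps)
    also have "\<dots> = moeb 0 (2*a) (-1) c" using moeb_scale a0 by (metis mult_minus1_right)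
    also have "\<dots> = P \<circ> N" unfolding P_def N_def moeb_comp_fun[OF detP detN]
      by (intro arg_cong4[where f=moeb]) (simp_all add: algebra_simps)
    finally have JP: "J \<circ> P = P \<circ> N" .
    have bP: "bij P" unfolding P_def using moeb_bij_inv detP by blast
    have "J = J \<circ> (P \<circ> inv P)" using surj_iff[THEN iffD1, OF bij_is_surj[OF bP]] by simp
    also have "\<dots> = P \<circ> N \<circ> inv P" using JP by (simp add: o_assoc)
    finally show ?thesis unfolding N_def P_def is_moebius_def using detP by blast
  qed
qed

lemma invol_conj:
  assumes "moebius_involution J1" "moebius_involution J2"
  shows "map_conf_conj J1 J2"
proof -
  define N where "N = moeb (-1) 0 0 (1::complex)"
  obtain P1 where P1: "is_moebius P1" "J1 = P1 \<circ> N \<circ> inv P1" using invol_normal[OF assms(1)] N_def by blast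
  obtain P2 where P2: "is_moebius P2" "J2 = P2 \<circ> N \<circ> inv P2" using invol_normal[OF assms(2)] N_def by blast
  have b1: "bij P1" and b2: "bij P2" using P1 P2 is_moebius_bij by auto
  define \<phi> where "\<phi> = P2 \<circ> inv P1"
  have m: "is_moebius \<phi>" unfolding \<phi>_def using P1 P2 is_moebius_comp is_moebius_inv by blast
  have "inv \<phi> = P1 \<circ> inv P2" unfolding \<phi>_def
    using o_inv_distrib[OF b2 bij_imp_bij_inv[OF b1]] inv_inv_eq[OF b1] by simp
  then have "\<phi> \<circ> J1 \<circ> inv \<phi> = P2 \<circ> (inv P1 \<circ> P1) \<circ> N \<circ> (inv P1 \<circ> P1) \<circ> inv P2"
    unfolding \<phi>_def P1(2) by (simp add: o_assoc)
  also have "\<dots> = J2" using b1 P2(2) by (simp add: bij_is_inj)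
  finally show ?thesis unfolding map_conf_conj_def using m by metis
qed

lemma L_equiv:
  assumes "a \<noteq> 0" "l \<noteq> 0" "\<And>x. poly q2 (a*x+b) = l * poly q1 x + m"
  shows "conf_cov_equiv q1 q2"
proof -
  have d1: "1*a - (-b)*0 \<noteq> 0" using assms by simp
  have d2: "l*1 - m*0 \<noteq> 0" using assms by simp
  have "poly_sphere q2 = moeb l m 0 1 \<circ> poly_sphere q1 \<circ> moeb 1 (-b) 0 a"
  proof
    fix z show "poly_sphere q2 z = (moeb l m 0 1 \<circ> poly_sphere q1 \<circ> moeb 1 (-b) 0 a) z"
    proof (cases z)
      case None then show ?thesis by (simp add: moeb_def poly_sphere_def)
    next
      case (Some y)
      have "a * ((y - b)/a) + b = y" using assms by (simp add: field_simps)
      then have "poly q2 y = l * poly q1 ((y-b)/a) + m" using assms(3)[of "(y-b)/a"] by simp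
      then show ?thesis using Some assms by (simp add: moeb_def poly_sphere_def)
    qed
  qed
  then show ?thesis unfolding conf_cov_equiv_def is_moebius_def using d1 d2 by blast
qed

lemma poly_deg1: "degree (q::complex poly) = 1 \<Longrightarrow> poly q x = coeff q 0 + coeff q 1 * x"
proof -
  assume d: "degree q = 1"
  have "poly q x = (\<Sum>i\<le>degree q. coeff q i * x^i)" by (rule poly_altdef)
  also have "\<dots> = coeff q 0 + coeff q 1 * x" using d by (simp add: atMost_Suc)
  finally show ?thesis .
qed

lemma poly_deg2: "degree (q::complex poly) = 2 \<Longrightarrow> poly q x = coeff q 0 + coeff q 1 * x + coeff q 2 * x^2"
proof -
  assume d: "degree q = 2"
  have "poly q x = (\<Sum>i\<le>degree q. coeff q i * x^i)" by (rule poly_altdef)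
  also have "\<dots> = coeff q 0 + coeff q 1 * x + coeff q 2 * x^2" using d
    by (simp add: atMost_Suc numeral_2_eq_2 power2_eq_square)
  finally show ?thesis .
qed

lemma L_deg1:
  assumes "degree q1 = 1" "degree q2 = 1"
  shows "conf_cov_equiv q1 q2"
proof -
  have "q1 \<noteq> 0" "q2 \<noteq> 0" using assms by auto
  then have n1: "coeff q1 1 \<noteq> 0" "coeff q2 1 \<noteq> 0" using assms
    by (metis leading_coeff_0_iff)+
  define l where "l = coeff q2 1 / coeff q1 1"
  define m where "m = coeff q2 0 - l * coeff q1 0"
  have "l \<noteq> 0" using n1 unfolding l_def by simp
  moreover have "\<And>x. poly q2 (1*x+0) = l * poly q1 x + m"
    unfolding poly_deg1[OF assms(1)] poly_deg1[OF assms(2)] l_def m_def using n1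
    by (simp add: field_simps)
  ultimately show ?thesis using L_equiv[of 1 l q2 0 q1 m] by simp
qed

lemma L_deg2:
  assumes "degree q1 = 2" "degree q2 = 2"
  shows "conf_cov_equiv q1 q2"
proof -
  define A1 where "A1 = coeff q1 2"
  define B1 where "B1 = coeff q1 1"
  define C1 where "C1 = coeff q1 0"
  define A2 where "A2 = coeff q2 2"
  define B2 where "B2 = coeff q2 1"
  define C2 where "C2 = coeff q2 0"
  have "q1 \<noteq> 0" "q2 \<noteq> 0" using assms by auto
  then have n1: "A1 \<noteq> 0" "A2 \<noteq> 0" using assms unfolding A1_def A2_def
    by (metis leading_coeff_0_iff)+
  define h where "h = B1/(2*A1) - B2/(2*A2)"
  define l where "l = A2 / A1"
  define m where "m = (C2 - B2^2/(4*A2)) - l * (C1 - B1^2/(4*A1))"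
  have "l \<noteq> 0" using n1 unfolding l_def by simp
  moreover have "\<And>x. poly q2 (1*x+h) = l * poly q1 x + m"
    unfolding poly_deg2[OF assms(1)] poly_deg2[OF assms(2)] l_def m_def h_def
      A1_def[symmetric] B1_def[symmetric] C1_def[symmetric] A2_def[symmetric] B2_def[symmetric] C2_def[symmetric]
    using n1 by (simp add: field_simps power2_eq_square)
  ultimately show ?thesis using L_equiv[of 1 l q2 h q1 m] by simp
qed

lemma L_main:
  fixes q1 q2 :: "complex poly" and g :: "complex \<Rightarrow> complex"
  assumes deg1: "degree q1 = n" and deg2: "degree q2 = n" and n3: "n \<ge> 3" and a0: "a \<noteq> 0"
    and H: "\<And>x y. poly q1 x = poly q1 y \<Longrightarrow> x \<noteq> y \<Longrightarrow> poly q2 (a*x+b) = g y"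
  shows "\<exists>l m. l \<noteq> 0 \<and> (\<forall>x. poly q2 (a*x+b) = l * poly q1 x + m)"
proof -
  have "pderiv q1 \<noteq> 0" using deg1 n3 by (simp add: pderiv_eq_0_iff)
  then have fin: "finite (poly q1 ` {x. poly (pderiv q1) x = 0})" using poly_roots_finite by blast
  obtain c where c: "c \<notin> poly q1 ` {x. poly (pderiv q1) x = 0}"
    using ex_new_if_finite[OF infinite_UNIV_char_0 fin] by blast
  define Q where "Q = q1 - [:c:]"
  have degQ: "degree Q = n"
  proof -
    have "degree (q1 + - [:c:]) = degree q1" using deg1 n3 by (intro degree_add_eq_left) simp
    moreover have "q1 - [:c:] = q1 + - [:c:]" by (rule diff_conv_add_uminus)
    ultimately show ?thesis unfolding Q_def using deg1 by metis
  qed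
  have Q0: "Q \<noteq> 0" using degQ n3 by auto
  have pQ: "poly Q x = poly q1 x - c" for x unfolding Q_def by simp
  have dQ: "pderiv Q = pderiv q1" unfolding Q_def by (simp add: pderiv_diff pderiv_pCons)
  have rsf: "rsquarefree Q" unfolding rsquarefree_roots dQ pQ using c by force
  define R where "R = {x. poly Q x = 0}"
  have finR: "finite R" unfolding R_def using poly_roots_finite[OF Q0] .
  have "n = degree (smult (lead_coeff Q) (\<Prod>z\<in>R. [:-z, 1:]))"
    using complex_poly_decompose_rsquarefree[OF rsf] degQ unfolding R_def by simp
  also have "\<dots> \<le> degree (\<Prod>z\<in>R. [:-z, 1:])" by simp
  also have "\<dots> \<le> sum (degree \<circ> (\<lambda>z. [:-z, 1:])) R" using degree_prod_sum_le[OF finR] .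
  also have "\<dots> = card R" by simp
  finally have cardR: "card R \<ge> n" .
  have const: "poly q2 (a*x+b) = poly q2 (a*y+b)" if "x \<in> R" "y \<in> R" for x y
  proof (cases "x = y")
    case True then show ?thesis by simp
  next
    case False
    have "card (R - {x, y}) \<ge> card R - card {x,y}" by (rule diff_card_le_card_Diff) simp
    moreover have "card {x,y} \<le> 2" by (simp add: card_insert_le_m1)
    ultimately have "card (R - {x,y}) > 0" using cardR n3 by linarith
    then obtain z where z: "z \<in> R" "z \<noteq> x" "z \<noteq> y" by (metis DiffE card_gt_0_iff ex_in_conv insertCI)
    have "poly q1 x = poly q1 z" "poly q1 y = poly q1 z" using that z unfolding R_def pQ by auto
    then have "poly q2 (a*x+b) = g z" "poly q2 (a*y+b) = g z" using H z by auto
    then show ?thesis by simp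
  qed
  have "R \<noteq> {}" using cardR n3 by auto
  then obtain x0 where x0: "x0 \<in> R" by blast
  define p where "p = pcompose q2 [:b, a:]"
  have pp: "poly p x = poly q2 (a*x+b)" for x unfolding p_def by (simp add: poly_pcompose algebra_simps)
  have degp: "degree p = n" unfolding p_def using degree_pcompose[of q2 "[:b,a:]"] deg2 a0 by simp
  define e where "e = poly p x0"
  define l where "l = lead_coeff p / lead_coeff q1"
  have p0: "p \<noteq> 0" using degp n3 by auto
  have q10: "q1 \<noteq> 0" using deg1 n3 by auto
  have l0: "l \<noteq> 0" unfolding l_def using p0 q10 by simp
  have eq: "p - [:e:] = smult l Q"
  proof (rule poly_eqI_degree_lead_coeff[of _ n _ R])
    show "coeff (p - [:e:]) n = coeff (smult l Q) n"
    proof -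
      obtain m where m: "n = Suc m" using n3 by (cases n) auto
      have "coeff (p - [:e:]) n = lead_coeff p" using degp m by (simp add: coeff_pCons)
      moreover have "coeff (smult l Q) n = l * lead_coeff q1" using deg1 m unfolding Q_def by (simp add: coeff_pCons)
      moreover have "l * lead_coeff q1 = lead_coeff p" unfolding l_def using q10 by simp
      ultimately show ?thesis by simp
    qed
    show "n \<le> card R" by fact
    show "degree (p - [:e:]) \<le> n" using degp by (intro degree_diff_le) auto
    show "degree (smult l Q) \<le> n" using degQ by simp
    show "poly (p - [:e:]) z = poly (smult l Q) z" if "z \<in> R" for z
      using that const[OF that x0] unfolding R_def e_def by (simp add: pp)
  qed
  have "poly q2 (a*x+b) = l * poly q1 x + (e - l*c)" for x
  proof -
    have "poly (p - [:e:]) x = poly (smult l Q) x" using eq by simp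
    then show ?thesis unfolding pp[symmetric] by (simp add: pQ algebra_simps)
  qed
  then show ?thesis using l0 by blast
qed

lemma Cov0_None: "(None, w) \<in> Cov0 q \<Longrightarrow> w = None"
  unfolding Cov0_def by (auto split: if_splits)

lemma Cov0_None2: "(z, None) \<in> Cov0 q \<Longrightarrow> z = None"
  unfolding Cov0_def by (auto split: if_splits)

lemma Cov0_Some: "(Some x, w) \<in> Cov0 q \<Longrightarrow> \<exists>y. w = Some y \<and> poly q x = poly q y"
  unfolding Cov0_def by (auto split: if_splits)

lemma Cov0_SomeI: "poly q x = poly q y \<Longrightarrow> x \<noteq> y \<Longrightarrow> (Some x, Some y) \<in> Cov0 q"
  unfolding Cov0_def by auto

lemma Cov0_critI: "poly (pderiv q) x = 0 \<Longrightarrow> (Some x, Some x) \<in> Cov0 q"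
  unfolding Cov0_def by auto

lemma Cov0_NoneI: "degree q \<ge> 2 \<Longrightarrow> (None, None) \<in> Cov0 q"
  unfolding Cov0_def by auto

lemma rsq_card:
  fixes Q :: "complex poly"
  assumes rsf: "rsquarefree Q"
  shows "degree Q \<le> card {x. poly Q x = 0}"
proof -
  define R where "R = {x. poly Q x = 0}"
  have Q0: "Q \<noteq> 0" using rsf unfolding rsquarefree_def by simp
  have finR: "finite R" unfolding R_def using poly_roots_finite[OF Q0] .
  have "degree Q = degree (smult (lead_coeff Q) (\<Prod>z\<in>R. [:-z, 1:]))"
    using complex_poly_decompose_rsquarefree[OF rsf] unfolding R_def by simp
  also have "\<dots> \<le> degree (\<Prod>z\<in>R. [:-z, 1:])" by simp
  also have "\<dots> \<le> sum (degree \<circ> (\<lambda>z. [:-z, 1:])) R" using degree_prod_sum_le[OF finR] .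
  also have "\<dots> = card R" by simp
  finally show ?thesis unfolding R_def .
qed

lemma SING:
  fixes q1 q2 :: "complex poly" and \<Phi> M :: "sphere \<Rightarrow> sphere"
  assumes d1: "degree q1 \<ge> 2" and d2: "degree q2 \<ge> 3"
    and iP: "inj \<Phi>" and iM: "inj M"
    and fwd: "\<And>z u. (z, u) \<in> Cov0 q1 \<Longrightarrow> (\<Phi> z, M u) \<in> Cov0 q2"
    and bwd: "\<And>z' u'. (z', u') \<in> Cov0 q2 \<Longrightarrow> \<exists>z u. (z, u) \<in> Cov0 q1 \<and> z' = \<Phi> z \<and> u' = M u"
    and x0: "\<Phi> None = Some x0"
  shows "\<forall>w. poly q2 w = poly q2 x0 \<longrightarrow> w = x0"
proof -
  have "(Some x0, M None) \<in> Cov0 q2" using fwd[OF Cov0_NoneI[OF d1]] x0 by simp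
  then obtain y0 where y0: "M None = Some y0" using Cov0_Some by blast
  have back_x0: "u' = Some y0" if hx: "(Some x0, u') \<in> Cov0 q2" for u'
  proof -
    obtain z u where zu: "(z, u) \<in> Cov0 q1" "Some x0 = \<Phi> z" "u' = M u" using bwd[OF hx] by blast
    then have "z = None" using x0 iP by (metis injD)
    then have "u = None" using zu Cov0_None by blast
    then show ?thesis using zu y0 by simp
  qed
  have fib: "w = y0" if "poly q2 w = poly q2 x0" "w \<noteq> x0" for w
    using back_x0[OF Cov0_SomeI[of q2 x0 w]] that by simp
  have crit_x0: "x0 = y0" if "poly (pderiv q2) x0 = 0"
    using back_x0[OF Cov0_critI[OF that]] by simp
  have crit_y0: "y0 = x0" if hy: "poly (pderiv q2) y0 = 0"
  proof -
    obtain z u where zu: "(z, u) \<in> Cov0 q1" "Some y0 = \<Phi> z" "Some y0 = M u"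
      using bwd[OF Cov0_critI[OF hy]] by blast
    then have "u = None" using y0 iM by (metis injD)
    then have "z = None" using zu Cov0_None2 by blast
    then show ?thesis using zu x0 by simp
  qed
  have "y0 = x0"
  proof (rule ccontr)
    assume ne: "y0 \<noteq> x0"
    define Q where "Q = q2 - [:poly q2 x0:]"
    have pQ: "poly Q x = poly q2 x - poly q2 x0" for x unfolding Q_def by simp
    have dQ: "pderiv Q = pderiv q2" unfolding Q_def by (simp add: pderiv_diff pderiv_pCons)
    have roots: "{x. poly Q x = 0} \<subseteq> {x0, y0}" using fib unfolding pQ by auto
    have "rsquarefree Q" unfolding rsquarefree_roots dQ
    proof (intro allI notI)
      fix x assume h: "poly Q x = 0 \<and> poly (pderiv q2) x = 0"
      then have "x = x0 \<or> x = y0" using roots by auto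
      then show False using h crit_x0 crit_y0 ne by auto
    qed
    then have "degree Q \<le> card {x. poly Q x = 0}" by (rule rsq_card)
    also have "\<dots> \<le> card {x0, y0}" by (rule card_mono[OF _ roots]) simp
    also have "\<dots> \<le> 2" by (simp add: card_insert_le_m1)
    finally have "degree Q \<le> 2" .
    moreover have "degree Q = degree q2"
    proof -
      have "degree (q2 + - [:poly q2 x0:]) = degree q2" using d2 by (intro degree_add_eq_left) simp
      moreover have "Q = q2 + - [:poly q2 x0:]" unfolding Q_def by (rule diff_conv_add_uminus)
      ultimately show ?thesis by simp
    qed
    ultimately show False using d2 by simp
  qed
  then show ?thesis using fib by fastforce
qed

lemma POW:
  fixes q :: "complex poly"
  assumes d: "degree q \<ge> 1" and fib: "\<forall>w. poly q w = poly q x0 \<longrightarrow> w = x0"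
  shows "\<forall>x. poly q x = lead_coeff q * (x - x0) ^ degree q + poly q x0"
proof
  fix x
  define p where "p = q - [:poly q x0:]"
  have pp: "poly p x = poly q x - poly q x0" for x unfolding p_def by simp
  have degp: "degree p = degree q"
  proof -
    have "degree (q + - [:poly q x0:]) = degree q" using d by (intro degree_add_eq_left) simp
    moreover have "p = q + - [:poly q x0:]" unfolding p_def by (rule diff_conv_add_uminus)
    ultimately show ?thesis by simp
  qed
  have lcp: "lead_coeff p = lead_coeff q" using degp d unfolding p_def
    by (cases "degree q") (auto simp: coeff_pCons)
  have R: "{z. poly p z = 0} = {x0}" using fib unfolding pp by auto
  have "p = smult (lead_coeff p) ([:-x0, 1:] ^ order x0 p)"
    using complex_poly_decompose[of p] unfolding R by simp
  then obtain k where eq: "p = smult (lead_coeff q) ([:-x0, 1:] ^ k)" using lcp by metis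
  have q0: "q \<noteq> 0" using d by auto
  then have lc0: "lead_coeff q \<noteq> 0" by simp
  have "degree (smult (lead_coeff q) ([:-x0, 1:] ^ k)) = k" using lc0 by (simp add: degree_linear_power)
  then have k: "k = degree q" using eq degp by simp
  have "poly p x = lead_coeff q * (x - x0) ^ k" by (subst eq) (simp add: poly_power)
  then have "poly p x = lead_coeff q * (x - x0) ^ degree q" using k by simp
  then show "poly q x = lead_coeff q * (x - x0) ^ degree q + poly q x0" unfolding pp by (simp add: algebra_simps)
qed

lemma mem_comp_graph: "(z, w) \<in> corr_comp (graph f) C \<longleftrightarrow> (\<exists>v. (z, v) \<in> C \<and> w = f v)"
  unfolding corr_comp_def graph_def by auto

lemma mem_comp_graph_r: "(z, w) \<in> corr_comp C (graph g) \<longleftrightarrow> (g z, w) \<in> C"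
  unfolding corr_comp_def graph_def by auto

theorem mainTheorem8:
  fixes J1 J2 :: "sphere \<Rightarrow> sphere" and q1 q2 :: "complex poly" and d :: nat
  assumes "moebius_involution J1" and "moebius_involution J2"
    and "degree q1 = d + 1" and "degree q2 = d + 1"
    and "corr_conf_conj (corr_comp (graph J1) (Cov0 q1)) (corr_comp (graph J2) (Cov0 q2))"
  shows "map_conf_conj J1 J2 \<and> conf_cov_equiv q1 q2"
proof
  show "map_conf_conj J1 J2" using invol_conj assms(1,2) .
  show "conf_cov_equiv q1 q2"
  proof -
    obtain \<phi> where phi: "is_moebius \<phi>"
      and F: "corr_comp (graph J2) (Cov0 q2) = corr_comp (graph \<phi>) (corr_comp (corr_comp (graph J1) (Cov0 q1)) (graph (inv \<phi>)))"
      using assms(5) unfolding corr_conf_conj_def by blast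
    have J1J1: "J1 (J1 v) = v" for v using assms(1) unfolding moebius_involution_def by (metis comp_apply id_apply)
    have J2J2: "J2 (J2 v) = v" for v using assms(2) unfolding moebius_involution_def by (metis comp_apply id_apply)
    have bphi: "bij \<phi>" using is_moebius_bij[OF phi] .
    have injphi: "inj \<phi>" using bphi bij_is_inj by blast
    define M where "M = J2 \<circ> \<phi> \<circ> J1"
    have bJ1: "bij J1" using J1J1 by (metis o_bij comp_apply id_apply ext)
    have bJ2: "bij J2" using J2J2 by (metis o_bij comp_apply id_apply ext)
    have bM: "bij M" unfolding M_def using bJ1 bJ2 bphi by (intro bij_comp) auto
    have key: "(\<phi> z, M u) \<in> Cov0 q2" if "(z, u) \<in> Cov0 q1" for z u
    proof -
      have "(z, J1 u) \<in> corr_comp (graph J1) (Cov0 q1)" using that mem_comp_graph by blast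
      then have "(\<phi> z, J1 u) \<in> corr_comp (corr_comp (graph J1) (Cov0 q1)) (graph (inv \<phi>))"
        unfolding mem_comp_graph_r using injphi by simp
      then have "(\<phi> z, \<phi> (J1 u)) \<in> corr_comp (graph J2) (Cov0 q2)" unfolding F mem_comp_graph by blast
      then obtain v where "(\<phi> z, v) \<in> Cov0 q2" "\<phi> (J1 u) = J2 v" unfolding mem_comp_graph by blast
      then show ?thesis using J2J2 unfolding M_def by (metis comp_apply)
    qed
    have bwd: "\<exists>z u. (z, u) \<in> Cov0 q1 \<and> z' = \<phi> z \<and> u' = M u" if h: "(z', u') \<in> Cov0 q2" for z' u'
    proof -
      have "(z', J2 u') \<in> corr_comp (graph J2) (Cov0 q2)" using h J2J2 mem_comp_graph by metis
      then obtain v where v: "(inv \<phi> z', v) \<in> corr_comp (graph J1) (Cov0 q1)" "J2 u' = \<phi> v"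
        unfolding F mem_comp_graph mem_comp_graph_r by blast
      then obtain w where w: "(inv \<phi> z', w) \<in> Cov0 q1" "v = J1 w" unfolding mem_comp_graph by blast
      have "z' = \<phi> (inv \<phi> z')" using bphi by (simp add: bij_is_surj surj_f_inv_f)
      moreover have "u' = M w" unfolding M_def using v w J2J2 J1J1 by (metis comp_apply)
      ultimately show ?thesis using w by blast
    qed
    consider "d = 0" | "d = 1" | "d \<ge> 2" by linarith
    then show ?thesis
    proof cases
      case 1 then show ?thesis using L_deg1 assms(3,4) by simp
    next
      case 2 then show ?thesis using L_deg2 assms(3,4) by simp
    next
      case 3
      show ?thesis
      proof (cases "\<phi> None")
        case phiN: None
        obtain a b c e where det: "a*e - b*c \<noteq> 0" and ph: "\<phi> = moeb a b c e"
          using phi unfolding is_moebius_def by blast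
        have c0: "c = 0" using phiN ph by (auto simp: moeb_def split: if_splits)
        then have ae: "a \<noteq> 0" "e \<noteq> 0" using det by auto
        have phS: "\<phi> (Some x) = Some ((a/e)*x + b/e)" for x
          using ph c0 ae by (simp add: moeb_def add_divide_distrib)
        define g where "g y = poly q2 (the (M (Some y)))" for y
        have H: "poly q2 ((a/e)*x + b/e) = g y" if "poly q1 x = poly q1 y" "x \<noteq> y" for x y
        proof -
          have "(Some ((a/e)*x + b/e), M (Some y)) \<in> Cov0 q2"
            using key[OF Cov0_SomeI[OF that]] phS by simp
          then show ?thesis unfolding g_def using Cov0_Some by fastforce
        qed
        have "\<exists>l m. l \<noteq> 0 \<and> (\<forall>x. poly q2 ((a/e)*x + b/e) = l * poly q1 x + m)"
          by (rule L_main[where g=g and n="d+1"]) (use assms(3,4) 3 ae H in auto)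
        then obtain l m where lm: "l \<noteq> 0" "\<And>x. poly q2 ((a/e)*x + b/e) = l * poly q1 x + m" by blast
        show ?thesis using L_equiv[of "a/e" l q2 "b/e" q1 m] lm ae by simp
      next
        case (Some x0)
        have f2: "\<forall>w. poly q2 w = poly q2 x0 \<longrightarrow> w = x0"
          by (rule SING[of q1 q2 \<phi> M]) (use assms(3,4) 3 injphi bij_is_inj[OF bM] key bwd Some in auto)
        have sP: "\<phi> (inv \<phi> y) = y" for y using bphi by (simp add: bij_is_surj surj_f_inv_f)
        have sM: "M (inv M y) = y" for y using bM by (simp add: bij_is_surj surj_f_inv_f)
        obtain x1 where x1: "inv \<phi> None = Some x1"
          using sP[of None] Some by (cases "inv \<phi> None") auto
        have f1: "\<forall>w. poly q1 w = poly q1 x1 \<longrightarrow> w = x1"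
        proof (rule SING[of q2 q1 "inv \<phi>" "inv M"])
          show "inj (inv \<phi>)" using bij_imp_bij_inv[OF bphi] bij_is_inj by blast
          show "inj (inv M)" using bij_imp_bij_inv[OF bM] bij_is_inj by blast
          show "(inv \<phi> z, inv M u) \<in> Cov0 q1" if hz: "(z, u) \<in> Cov0 q2" for z u
          proof -
            obtain z0 u0 where zu: "(z0, u0) \<in> Cov0 q1" "z = \<phi> z0" "u = M u0" using bwd[OF hz] by blast
            have "inv \<phi> z = z0" unfolding zu(2) using injphi by (rule inv_f_f)
            moreover have "inv M u = u0" unfolding zu(3) using bij_is_inj[OF bM] by (rule inv_f_f)
            ultimately show ?thesis using zu(1) by simp
          qed
          show "\<exists>z' u'. (z', u') \<in> Cov0 q2 \<and> z = inv \<phi> z' \<and> u = inv M u'" if hz: "(z, u) \<in> Cov0 q1" for z u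
          proof (intro exI conjI)
            show "(\<phi> z, M u) \<in> Cov0 q2" using key[OF hz] .
            show "z = inv \<phi> (\<phi> z)" using injphi by (simp add: inv_f_f)
            show "u = inv M (M u)" using bij_is_inj[OF bM] by (simp add: inv_f_f)
          qed
          show "2 \<le> degree q2" using assms(4) 3 by simp
          show "3 \<le> degree q1" using assms(3) 3 by simp
          show "inv \<phi> None = Some x1" by (rule x1)
        qed
        have p1: "\<forall>x. poly q1 x = lead_coeff q1 * (x - x1) ^ degree q1 + poly q1 x1"
          by (rule POW[OF _ f1]) (simp add: assms(3))
        have p2: "\<forall>x. poly q2 x = lead_coeff q2 * (x - x0) ^ degree q2 + poly q2 x0"
          by (rule POW[OF _ f2]) (simp add: assms(4))
        have "q1 \<noteq> 0" "q2 \<noteq> 0" using assms(3,4) by auto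
        then have l1: "lead_coeff q1 \<noteq> 0" "lead_coeff q2 \<noteq> 0" by simp_all
        define l where "l = lead_coeff q2 / lead_coeff q1"
        define m where "m = poly q2 x0 - l * poly q1 x1"
        have "poly q2 (1*x + (x0 - x1)) = l * poly q1 x + m" for x
        proof -
          define t where "t = (x - x1) ^ (d+1)"
          have "1*x + (x0 - x1) - x0 = x - x1" by simp
          then have a: "poly q2 (1*x + (x0 - x1)) = lead_coeff q2 * t + poly q2 x0"
            using p2[rule_format, of "1*x + (x0 - x1)"] assms(4) unfolding t_def by metis
          have b: "poly q1 x = lead_coeff q1 * t + poly q1 x1"
            using p1[rule_format, of x] assms(3) unfolding t_def by metis
          show ?thesis unfolding a b l_def m_def using l1 by (simp add: field_simps)
        qed
        moreover have "l \<noteq> 0" using l1 unfolding l_def by simp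
        ultimately show ?thesis using L_equiv[of 1 l q2 "x0 - x1" q1 m] by simp
      qed
    qed
  qed
qed

end
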